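(* Let $n\ge1$, $D\ge1$, and let $X_n=\{\mathbf{x}^0,\ldots,\mathbf{x}^{n-1}\}\subseteq\{0,1\}^D$ consist of $n$ pairwise distinct vectors, indexed so that $\mathbf{a}\cdot\mathbf{x}^0<\cdots<\mathbf{a}\cdot\mathbf{x}^{n-1}$ for some $\mathbf{a}\in\mathbb{Z}^D$. Then there is a seven-layer Boolean threshold network with $D$ input nodes and $D$ output nodes that is a perfect autoencoder for $X_n$, in which the designated middle hidden layer has $2\lceil\log_2\sqrt n\rceil$ nodes and the other hidden layers together have $(D+5)\lceil\sqrt n\rceil+D$ nodes.
   Context: A Boolean threshold function is a map $\{0,1\}^h\to\{0,1\}$, $\mathbf{u}\mapsto[\mathbf{w}\cdot\mathbf{u}\ge\theta]$ (value $1$ iff $\mathbf{w}\cdot\mathbf{u}\ge\theta$) with $\mathbf{w}\in\mathbb{Z}^h,\theta\in\mathbb{Z}$. An $L$-layer Boolean threshold network has layers $1,\ldots,L$; layer $1$ is the input; each node of layer $t+1$ computes a Boolean threshold function of the values of layer $t$; layers $2,\ldots,L-1$ are hidden. If layer $k$ is designated the middle layer, the encoder $\mathbf{f}$ is the map from layer $1$ values to layer $k$ values and the decoder $\mathbf{g}$ the map from layer $k$ values to layer $L$ values; the network is a perfect autoencoder for $X_n$ if $\mathbf{g}(\mathbf{f}(\mathbf{x}^i))=\mathbf{x}^i$ for all $i$. *)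

theory Defs
  imports Complex_Main
begin

definition dot :: "int list \<Rightarrow> int list \<Rightarrow> int" where
  "dot w u = sum_list (map2 (*) w u)"

definition ivec :: "bool list \<Rightarrow> int list" where
  "ivec u = map of_bool u"

definition thr :: "int list \<times> int \<Rightarrow> bool list \<Rightarrow> bool" where
  "thr p u = (dot (fst p) (ivec u) \<ge> snd p)"

definition layer_apply :: "(int list \<times> int) list \<Rightarrow> bool list \<Rightarrow> bool list" where
  "layer_apply l u = map (\<lambda>p. thr p u) l"

(* A network with L layers is given by the list of its L-1 non-input layers
   (layers 2..L, in order); layer t (t \<ge> 2) is the list element at index t-2. *)
definition net_apply :: "(int list \<times> int) list list \<Rightarrow> bool list \<Rightarrow> bool list" where
  "net_apply Ls u = fold layer_apply Ls u"

fun wf_net :: "nat \<Rightarrow> (int list \<times> int) list list \<Rightarrow> bool" where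
  "wf_net d [] = True"
| "wf_net d (l # Ls) = ((\<forall>p\<in>set l. length (fst p) = d) \<and> wf_net (length l) Ls)"

end

theory Submission imports Defs begin

definition mk_layer :: "nat \<Rightarrow> nat \<Rightarrow> (nat \<Rightarrow> nat \<Rightarrow> int) \<Rightarrow> (nat \<Rightarrow> int) \<Rightarrow> (int list \<times> int) list" where
  "mk_layer M L W T = map (\<lambda>j. (map (W j) [0..<M], T j)) [0..<L]"

definition dl :: "(nat \<Rightarrow> int) \<Rightarrow> nat \<Rightarrow> int" where
  "dl f l = (if l = 0 then f 0 else f l - f (l - 1))"

lemma dot_eq: "length w = length u \<Longrightarrow> dot w (ivec u) = (\<Sum>l<length w. if u!l then w!l else 0)"
proof (induction w arbitrary: u)
  case Nil then show ?case by (simp add: dot_def ivec_def)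
next
  case (Cons c w)
  then obtain b v where u: "u = b # v" by (cases u) auto
  with Cons have "length w = length v" by simp
  with Cons.IH have IH: "dot w (ivec v) = (\<Sum>l<length w. if v!l then w!l else 0)" by blast
  have "dot (c#w) (ivec u) = (if b then c else 0) + dot w (ivec v)"
    by (simp add: u dot_def ivec_def)
  also have "(\<Sum>l<length (c#w). if u!l then (c#w)!l else 0) = (if b then c else 0) + (\<Sum>l<length w. if v!l then w!l else 0)"
    unfolding length_Cons sum.lessThan_Suc_shift by (auto simp: u intro!: sum.cong)
  ultimately show ?case using IH by simp
qed

lemma layer_sem:
  assumes "length u = M" "\<forall>l<M. u!l = U l"
  shows "layer_apply (mk_layer M L W T) u = map (\<lambda>j. T j \<le> (\<Sum>l<M. if U l then W j l else 0)) [0..<L]"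
proof -
  have "\<And>j. (\<Sum>l<M. if U l then map (W j) [0..<M] ! l else 0) = (\<Sum>l<M. if U l then W j l else 0)"
    by (intro sum.cong) auto
  moreover have "\<And>j. dot (map (W j) [0..<M]) (ivec u) = (\<Sum>l<M. if U l then map (W j) [0..<M] ! l else 0)"
    using assms by (auto simp add: dot_eq intro!: sum.cong)
  ultimately show ?thesis unfolding layer_apply_def mk_layer_def thr_def by simp
qed

lemma len_mk[simp]: "length (mk_layer M L W T) = L"
  by (simp add: mk_layer_def)

lemma wf_mk[simp]: "wf_net d (mk_layer M L W T # Ls) = ((0 < L \<longrightarrow> M = d) \<and> wf_net L Ls)"
  by (auto simp add: mk_layer_def)

lemma sum_split: "(\<Sum>l<a+b. f l) = (\<Sum>l<a. f l) + (\<Sum>l<b. f (a+l)::int)" for a b :: nat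
  by (induction b) (auto simp: add.assoc add_Suc_right)

lemma unary_lin:
  assumes "p < s"
  shows "(\<Sum>l<s. if l \<le> p then dl f l else 0) = f p"
proof -
  have "(\<Sum>l<s. if l \<le> p then dl f l else 0) = (\<Sum>l\<in>{..<s} \<inter> {..p}. dl f l)"
    by (simp add: sum.inter_restrict of_bool_def if_distrib cong: if_cong)
  also have "{..<s} \<inter> {..p} = {..p}" using assms by auto
  also have "(\<Sum>l\<le>p. dl f l) = f p"
    by (induction p) (auto simp: dl_def)
  finally show ?thesis .
qed

lemma bits_sum:
  assumes "(p::nat) < 2^t"
  shows "(\<Sum>l<t. if bit p l then 2^l else 0) = (int p)"
proof -
  have "(\<Sum>l<t. if bit p l then 2^l else 0) = int (\<Sum>l<t. 2^l * of_bool (bit p l))" by (simp add: of_bool_def if_distrib cong: if_cong)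
  also have "(\<Sum>l<t. 2^l * of_bool (bit p l)) = take_bit t p"
    by (simp flip: horner_sum_bit_eq_take_bit add: horner_sum_eq_sum mult.commute atLeast0LessThan)
  also have "take_bit t p = p" using assms by (simp add: take_bit_nat_eq_self)
  finally show ?thesis .
qed

lemma sum_delta_int: "c < M \<Longrightarrow> (\<Sum>l<M. if l = c then (g l::int) else 0) = g c" for M c :: nat
  by (subst sum.delta) auto

lemma delta_of_bool: "c < M \<Longrightarrow> (\<Sum>l<M. if U l then (if l = c then 1 else 0) else 0) = (of_bool (U c)::int)" for M c :: nat
proof -
  assume "c < M"
  have "(\<Sum>l<M. if U l then (if l = c then 1 else 0) else 0) = (\<Sum>l<M. if l = c then (of_bool (U l)::int) else 0)"
    by (intro sum.cong) auto
  also have "\<dots> = of_bool (U c)" using \<open>c < M\<close> by (rule sum_delta_int)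
  finally show ?thesis .
qed

lemma V_facts:
  fixes n :: nat and v :: "nat \<Rightarrow> int"
  assumes "n \<ge> 1" "\<forall>i j. i < j \<and> j < n \<longrightarrow> v i < v j"
  shows "strict_mono (\<lambda>k. if k < n then v k else v (n-1) + int (k - n) + 1)"
proof (rule strict_monoI)
  fix k k' :: nat assume kk: "k < k'"
  have le: "v k \<le> v (n-1)" if "k < n" for k
  proof (cases "k = n - 1")
    case False
    then have "k < n - 1" using that by linarith
    moreover have "n - 1 < n" using assms(1) by linarith
    ultimately show ?thesis using assms(2) by (meson less_imp_le)
  qed simp
  show "(if k < n then v k else v (n-1) + int (k - n) + 1) < (if k' < n then v k' else v (n-1) + int (k' - n) + 1)"
    using kk assms le[of k] by auto
qed

lemma real_facts:
  assumes "n \<ge> (1::nat)"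
  shows "n \<le> nat \<lceil>sqrt (real n)\<rceil> * nat \<lceil>sqrt (real n)\<rceil>"
    and "nat \<lceil>sqrt (real n)\<rceil> \<le> 2 ^ nat \<lceil>log 2 (sqrt (real n))\<rceil>"
    and "0 < nat \<lceil>sqrt (real n)\<rceil>"
proof -
  have sp: "sqrt (real n) \<ge> 1" using assms by simp
  have a: "sqrt (real n) \<le> real (nat \<lceil>sqrt (real n)\<rceil>)" by (rule real_nat_ceiling_ge)
  have "real n = sqrt (real n) * sqrt (real n)" by simp
  also have "\<dots> \<le> real (nat \<lceil>sqrt (real n)\<rceil>) * real (nat \<lceil>sqrt (real n)\<rceil>)"
    using a sp by (intro mult_mono) (use a sp in linarith)+
  finally show "n \<le> nat \<lceil>sqrt (real n)\<rceil> * nat \<lceil>sqrt (real n)\<rceil>"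
    by (metis of_nat_le_iff of_nat_mult)
  show "0 < nat \<lceil>sqrt (real n)\<rceil>" using a sp by linarith
  have b: "log 2 (sqrt (real n)) \<le> real (nat \<lceil>log 2 (sqrt (real n))\<rceil>)" by (rule real_nat_ceiling_ge)
  have "sqrt (real n) = 2 powr log 2 (sqrt (real n))" using sp by simp
  also have "\<dots> \<le> 2 powr real (nat \<lceil>log 2 (sqrt (real n))\<rceil>)" using b by (intro powr_mono) auto
  also have "\<dots> = real (2 ^ nat \<lceil>log 2 (sqrt (real n))\<rceil>)" by (simp add: powr_realpow)
  finally have "\<lceil>sqrt (real n)\<rceil> \<le> int (2 ^ nat \<lceil>log 2 (sqrt (real n))\<rceil>)"
    using sp by (simp add: ceiling_le_iff)
  then show "nat \<lceil>sqrt (real n)\<rceil> \<le> 2 ^ nat \<lceil>log 2 (sqrt (real n))\<rceil>" by linarith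
qed

lemma mk_lens[simp]: "\<forall>p\<in>set (mk_layer M L W T). length (fst p) = M"
  by (auto simp add: mk_layer_def)

lemma layer_sem':
  assumes "\<And>j. j < L \<Longrightarrow> (T j \<le> (\<Sum>l<M. if U l then W j l else 0)) = S j"
    and "length u = M" and "\<forall>l<M. u!l = U l"
  shows "layer_apply (mk_layer M L W T) u = map S [0..<L]"
  using layer_sem[OF assms(2,3)] assms(1) by simp

theorem theorem22:
  fixes n D :: nat and x :: "nat \<Rightarrow> bool list" and a :: "int list"
  assumes "n \<ge> 1" and "D \<ge> 1"
    and "\<forall>i<n. length (x i) = D"
    and "inj_on x {..<n}"
    and "length a = D"
    and "\<forall>i j. i < j \<and> j < n \<longrightarrow> dot a (ivec (x i)) < dot a (ivec (x j))"
  shows "\<exists>Ls :: (int list \<times> int) list list. \<exists>k :: nat.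
           length Ls = 6 \<and> wf_net D Ls \<and> length (Ls ! 5) = D \<and>
           2 \<le> k \<and> k \<le> 6 \<and>
           length (Ls ! (k - 2)) = 2 * nat \<lceil>log 2 (sqrt (real n))\<rceil> \<and>
           (\<Sum>t\<in>{2..6} - {k}. length (Ls ! (t - 2))) = (D + 5) * nat \<lceil>sqrt (real n)\<rceil> + D \<and>
           (\<forall>i<n. net_apply (drop (k - 1) Ls) (net_apply (take (k - 1) Ls) (x i)) = x i)"
proof -
  define s where "s = nat \<lceil>sqrt (real n)\<rceil>"
  define t where "t = nat \<lceil>log 2 (sqrt (real n))\<rceil>"
  have sq: "n \<le> s * s" and st: "s \<le> 2 ^ t" and s0: "0 < s"
    using real_facts[OF assms(1)] unfolding s_def t_def by auto
  define v where "v = (\<lambda>k. dot a (ivec (x k)))"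
  define V where "V = (\<lambda>k. if k < n then v k else v (n-1) + int (k - n) + 1)"
  have "strict_mono V" unfolding V_def by (rule V_facts[OF assms(1)]) (use assms(6) in \<open>simp add: v_def\<close>)
  then have Vle: "\<And>k k'. V k \<le> V k' \<longleftrightarrow> k \<le> k'" by (simp add: strict_mono_less_eq)
  define W2 where "W2 = (\<lambda>j l. if j < s then a!l else (if l = j - s then 1 else 0::int))"
  define T2 where "T2 = (\<lambda>j. if j < s then V (j*s) else 1)"
  define W3 where "W3 = (\<lambda>j l. if j < s then (if l < s then dl (\<lambda>p. - V (p*s+j)) l else a!(l-s)) else (if l = j - s then 1 else 0::int))"
  define T3 where "T3 = (\<lambda>j. if j < s then 0 else 1::int)"
  define W4 where "W4 = (\<lambda>j l. if j < t then (if l < s then 0 else dl (\<lambda>p. of_bool (bit p j)) (l-s)) else (if l < s then dl (\<lambda>q. of_bool (bit q (j-t))) l else 0::int))"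
  define W5 where "W5 = (\<lambda>j l. if j < s then (if l < t then 2^l else 0) else (if l < t then 0 else 2^(l-t)::int))"
  define T5 where "T5 = (\<lambda>j. int (if j < s then j else j - s))"
  define W6 where "W6 = (\<lambda>j l. if l < s then dl (\<lambda>p'. of_bool (p' = j div D)) l else dl (\<lambda>q'. of_bool (x ((j div D)*s+q') ! (j mod D))) (l-s))"
  define W7 where "W7 = (\<lambda>d l. if l mod D = d then 1 else 0::int)"
  define L2 where "L2 = mk_layer D (s+D) W2 T2"
  define L3 where "L3 = mk_layer (s+D) (s+s) W3 T3"
  define L4 where "L4 = mk_layer (s+s) (t+t) W4 (\<lambda>_. 1)"
  define L5 where "L5 = mk_layer (t+t) (s+s) W5 T5"
  define L6 where "L6 = mk_layer (s+s) (D*s) W6 (\<lambda>_. 2)"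
  define L7 where "L7 = mk_layer (D*s) D W7 (\<lambda>_. 1)"
  have main: "net_apply (drop 3 [L2,L3,L4,L5,L6,L7]) (net_apply (take 3 [L2,L3,L4,L5,L6,L7]) (x i)) = x i"
    if i: "i < n" for i
  proof -
    define p0 where "p0 = i div s"
    define q0 where "q0 = i mod s"
    define xi where "xi = x i"
    have lxi: "length xi = D" using assms(3) i by (simp add: xi_def)
    have p0s: "p0 < s" using i sq s0 unfolding p0_def
      by (metis div_less_iff_less_mult order_less_le_trans)
    have q0s: "q0 < s" using s0 unfolding q0_def by simp
    have ipq: "i = p0 * s + q0" unfolding p0_def q0_def by simp
    have Vi: "V i = dot a (ivec xi)" using i by (simp add: V_def v_def xi_def)
    have dotxi: "(\<Sum>l<D. if xi ! l then a ! l else 0) = V i"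
      using Vi dot_eq[of a xi] assms(5) lxi by simp
    define S2 where "S2 = (\<lambda>j. if j < s then j \<le> p0 else xi ! (j - s))"
    define S3 where "S3 = (\<lambda>j. if j < s then j \<le> q0 else j - s \<le> p0)"
    define S4 where "S4 = (\<lambda>j. if j < t then bit p0 j else bit q0 (j - t))"
    define S5 where "S5 = (\<lambda>j. if j < s then j \<le> p0 else j - s \<le> q0)"
    define S6 where "S6 = (\<lambda>j. j div D = p0 \<and> xi ! (j mod D))"
    have E2: "layer_apply L2 xi = map S2 [0..<s+D]"
      unfolding L2_def
    proof (rule layer_sem')
      fix j assume j: "j < s + D"
      show "(T2 j \<le> (\<Sum>l<D. if xi ! l then W2 j l else 0)) = S2 j"
      proof (cases "j < s")
        case True
        then have "(\<Sum>l<D. if xi ! l then W2 j l else 0) = V i" using dotxi by (simp add: W2_def cong: if_cong)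
        then show ?thesis using True s0 by (simp add: T2_def S2_def Vle p0_def less_eq_div_iff_mult_less_eq)
      next
        case False
        then have "(\<Sum>l<D. if xi ! l then W2 j l else 0) = of_bool (xi ! (j - s))"
          using j by (simp add: W2_def delta_of_bool cong: if_cong)
        then show ?thesis using False by (simp add: T2_def S2_def)
      qed
    qed (use lxi in auto)
    have E3: "layer_apply L3 (map S2 [0..<s+D]) = map S3 [0..<s+s]"
      unfolding L3_def
    proof (rule layer_sem')
      fix j assume j: "j < s + s"
      show "(T3 j \<le> (\<Sum>l<s+D. if S2 l then W3 j l else 0)) = S3 j"
      proof (cases "j < s")
        case True
        have "(\<Sum>l<s+D. if S2 l then W3 j l else 0) = (\<Sum>l<s. if l \<le> p0 then dl (\<lambda>p. - V (p*s+j)) l else 0) + (\<Sum>l<D. if xi ! l then a ! l else 0)"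
          unfolding sum_split using True by (simp add: W3_def S2_def cong: if_cong)
        also have "\<dots> = - V (p0*s+j) + V i" using unary_lin[OF p0s] dotxi by simp
        finally show ?thesis using True q0s by (simp add: T3_def S3_def Vle ipq)
      next
        case False
        then have "(\<Sum>l<s+D. if S2 l then W3 j l else 0) = of_bool (S2 (j - s))"
          using j by (simp add: W3_def delta_of_bool cong: if_cong)
        moreover have "j - s < s" using False j by linarith
        ultimately show ?thesis using False by (simp add: T3_def S3_def S2_def)
      qed
    qed auto
    have E4: "layer_apply L4 (map S3 [0..<s+s]) = map S4 [0..<t+t]"
      unfolding L4_def
    proof (rule layer_sem')
      fix j assume j: "j < t + t"
      show "(1 \<le> (\<Sum>l<s+s. if S3 l then W4 j l else 0)) = S4 j"
      proof (cases "j < t")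
        case True
        have "(\<Sum>l<s+s. if S3 l then W4 j l else 0) = (\<Sum>l<s. if l \<le> p0 then dl (\<lambda>p. of_bool (bit p j)) l else 0)"
          unfolding sum_split using True by (simp add: W4_def S3_def cong: if_cong)
        also have "\<dots> = of_bool (bit p0 j)" using unary_lin[OF p0s] by simp
        finally show ?thesis using True by (simp add: S4_def)
      next
        case False
        have "(\<Sum>l<s+s. if S3 l then W4 j l else 0) = (\<Sum>l<s. if l \<le> q0 then dl (\<lambda>q. of_bool (bit q (j-t))) l else 0)"
          unfolding sum_split using False by (simp add: W4_def S3_def cong: if_cong)
        also have "\<dots> = of_bool (bit q0 (j-t))" using unary_lin[OF q0s] by simp
        finally show ?thesis using False by (simp add: S4_def)
      qed
    qed auto
    have E5: "layer_apply L5 (map S4 [0..<t+t]) = map S5 [0..<s+s]"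
      unfolding L5_def
    proof (rule layer_sem')
      fix j assume j: "j < s + s"
      show "(T5 j \<le> (\<Sum>l<t+t. if S4 l then W5 j l else 0)) = S5 j"
      proof (cases "j < s")
        case True
        have "(\<Sum>l<t+t. if S4 l then W5 j l else 0) = (\<Sum>l<t. if bit p0 l then 2^l else 0)"
          unfolding sum_split using True by (simp add: W5_def S4_def cong: if_cong)
        also have "\<dots> = int p0" using bits_sum p0s st by simp
        finally show ?thesis using True by (simp add: S5_def T5_def)
      next
        case False
        have "(\<Sum>l<t+t. if S4 l then W5 j l else 0) = (\<Sum>l<t. if bit q0 l then 2^l else 0)"
          unfolding sum_split using False by (simp add: W5_def S4_def cong: if_cong)
        also have "\<dots> = int q0" using bits_sum q0s st by simp
        finally show ?thesis using False by (simp add: S5_def T5_def of_nat_diff) linarith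
      qed
    qed auto
    have E6: "layer_apply L6 (map S5 [0..<s+s]) = map S6 [0..<D*s]"
      unfolding L6_def
    proof (rule layer_sem')
      fix j assume "j < D*s"
      have "(\<Sum>l<s+s. if S5 l then W6 j l else 0) =
          (\<Sum>l<s. if l \<le> p0 then dl (\<lambda>p'. of_bool (p' = j div D)) l else 0)
        + (\<Sum>l<s. if l \<le> q0 then dl (\<lambda>q'. of_bool (x ((j div D)*s+q') ! (j mod D))) l else 0)"
        unfolding sum_split by (simp add: W6_def S5_def cong: if_cong)
      also have "\<dots> = of_bool (p0 = j div D) + of_bool (x ((j div D)*s+q0) ! (j mod D))"
        using unary_lin[OF p0s] unary_lin[OF q0s] by simp
      finally show "(2 \<le> (\<Sum>l<s+s. if S5 l then W6 j l else 0)) = S6 j"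
        by (auto simp: S6_def ipq xi_def)
    qed auto
    have E7: "layer_apply L7 (map S6 [0..<D*s]) = map (\<lambda>d. xi ! d) [0..<D]"
      unfolding L7_def
    proof (rule layer_sem')
      fix d assume d: "d < D"
      have lt: "p0 * D + d < D * s"
      proof -
        have "p0 * D + d < (p0 + 1) * D" using d by simp
        also have "\<dots> \<le> s * D" using p0s by (intro mult_right_mono) auto
        finally show ?thesis by (simp add: mult.commute)
      qed
      have "(\<Sum>l<D*s. if S6 l then W7 d l else 0) = (\<Sum>l<D*s. if l = p0 * D + d then (of_bool (xi ! d)::int) else 0)"
      proof (intro sum.cong refl)
        fix l
        have "(S6 l \<and> l mod D = d) \<longleftrightarrow> (l = p0 * D + d \<and> xi ! d)"
          using d by (auto simp: S6_def)
        then show "(if S6 l then W7 d l else 0) = (if l = p0 * D + d then (of_bool (xi ! d)::int) else 0)"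
          by (auto simp: W7_def)
      qed
      also have "\<dots> = of_bool (xi ! d)" using lt by (rule sum_delta_int)
      finally show "(1 \<le> (\<Sum>l<D*s. if S6 l then W7 d l else 0)) = xi ! d" by simp
    qed auto
    have "map (\<lambda>d. xi ! d) [0..<D] = xi" using lxi map_nth[of xi] by simp
    then show ?thesis
      by (simp add: net_apply_def E2 E3 E4 E5 E6 E7 flip: xi_def)
  qed
  have set: "{2..6::nat} - {4} = {2,3,5,6}" by auto
  show ?thesis
    apply (rule exI[of _ "[L2,L3,L4,L5,L6,L7]"], rule exI[of _ 4])
    using main assms(2) s0
    by (simp add: set L2_def L3_def L4_def L5_def L6_def L7_def t_def s_def[symmetric] algebra_simps)
qed

end
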